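(* Let $R$ be a unital ring with involution, let $a\in R$ be core invertible and $b\in R$ with $a\overset{\circledast}{\leq} b$. Then the following conditions are equivalent: (1) $a\overset{\#}{\leq} b$; (2) $ab=ba$; (3) $a^{2}\overset{\circledast}{\leq} b^{2}$; (4) $a^{k}\overset{\circledast}{\leq} b^{k}$ for every integer $k\geq 2$. (Here $a^k$ is core invertible for all $k\ge 1$, with $(a^k)^{\circledast}=(a^{\circledast})^k$.)
   Context: $R$ is a ring with identity and an involution $x\mapsto x^{*}$. An element $a\in R$ is core invertible if there exists $x\in R$ with $axa=a$, $xR=aR$ and $Rx=Ra^{*}$; such $x$ is unique, called the core inverse of $a$ and denoted $a^{\circledast}$. Every core invertible $a$ is group invertible, with group inverse $a^{\#}$ the unique $x$ satisfying $axa=a$, $xax=x$, $ax=xa$. For $c$ core invertible and $d\in R$, $c\overset{\circledast}{\leq} d$ means $c^{\circledast}c=c^{\circledast}d$ and $cc^{\circledast}=dc^{\circledast}$. For group invertible $a$, the sharp partial order $a\overset{\#}{\leq} b$ means $a^{\#}a=a^{\#}b$ and $aa^{\#}=ba^{\#}$. *)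

theory Defs
  imports Main
begin

definition is_involution :: "('a::ring_1 \<Rightarrow> 'a) \<Rightarrow> bool" where
  "is_involution star \<longleftrightarrow>
     (\<forall>x y. star (x + y) = star x + star y) \<and>
     (\<forall>x y. star (x * y) = star y * star x) \<and>
     (\<forall>x. star (star x) = x)"

definition right_ideal :: "'a::ring_1 \<Rightarrow> 'a set" where
  "right_ideal a = {a * r | r. True}"

definition left_ideal :: "'a::ring_1 \<Rightarrow> 'a set" where
  "left_ideal a = {r * a | r. True}"

definition is_core_inverse :: "('a::ring_1 \<Rightarrow> 'a) \<Rightarrow> 'a \<Rightarrow> 'a \<Rightarrow> bool" where
  "is_core_inverse star a x \<longleftrightarrow>
     a * x * a = a \<and> right_ideal x = right_ideal a \<and> left_ideal x = left_ideal (star a)"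

definition core_invertible :: "('a::ring_1 \<Rightarrow> 'a) \<Rightarrow> 'a \<Rightarrow> bool" where
  "core_invertible star a \<longleftrightarrow> (\<exists>x. is_core_inverse star a x)"

definition core_inv :: "('a::ring_1 \<Rightarrow> 'a) \<Rightarrow> 'a \<Rightarrow> 'a" where
  "core_inv star a = (THE x. is_core_inverse star a x)"

definition is_group_inverse :: "'a::ring_1 \<Rightarrow> 'a \<Rightarrow> bool" where
  "is_group_inverse a x \<longleftrightarrow> a * x * a = a \<and> x * a * x = x \<and> a * x = x * a"

definition group_invertible :: "'a::ring_1 \<Rightarrow> bool" where
  "group_invertible a \<longleftrightarrow> (\<exists>x. is_group_inverse a x)"

definition group_inv :: "'a::ring_1 \<Rightarrow> 'a" where
  "group_inv a = (THE x. is_group_inverse a x)"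

definition core_le :: "('a::ring_1 \<Rightarrow> 'a) \<Rightarrow> 'a \<Rightarrow> 'a \<Rightarrow> bool" where
  "core_le star c d \<longleftrightarrow> core_invertible star c \<and>
     core_inv star c * c = core_inv star c * d \<and> c * core_inv star c = d * core_inv star c"

definition sharp_le :: "'a::ring_1 \<Rightarrow> 'a \<Rightarrow> bool" where
  "sharp_le a b \<longleftrightarrow> group_invertible a \<and>
     group_inv a * a = group_inv a * b \<and> a * group_inv a = b * group_inv a"

end

theory Submission
  imports Defs
begin

lemma inv_props:
  fixes star :: "'a::ring_1 \<Rightarrow> 'a"
  assumes inv: "is_involution star" and c: "is_core_inverse star a x"
  shows "a*x*a = a \<and> x*a*x = x \<and> star (a*x) = a*x \<and> x*a*a = a \<and> a*x*x = x"
proof -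
  have sm: "\<And>u v. star (u*v) = star v * star u" and ss: "\<And>u. star (star u) = u"
    using inv unfolding is_involution_def by auto
  have axa: "a*x*a = a" using c unfolding is_core_inverse_def by auto
  have "x \<in> right_ideal x" unfolding right_ideal_def by (rule CollectI, rule exI[of _ 1]) simp
  then have "x \<in> right_ideal a" using c unfolding is_core_inverse_def by auto
  then obtain r1 where r1: "x = a*r1" unfolding right_ideal_def by auto
  have "a \<in> right_ideal a" unfolding right_ideal_def by (rule CollectI, rule exI[of _ 1]) simp
  then have "a \<in> right_ideal x" using c unfolding is_core_inverse_def by auto
  then obtain r2 where r2: "a = x*r2" unfolding right_ideal_def by auto
  have "x \<in> left_ideal x" unfolding left_ideal_def by (rule CollectI, rule exI[of _ 1]) simp
  then have "x \<in> left_ideal (star a)" using c unfolding is_core_inverse_def by auto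
  then obtain s1 where s1: "x = s1 * star a" unfolding left_ideal_def by auto
  have sa: "star a = star a * star x * star a" using axa sm by (metis mult.assoc)
  have xx: "x = x * star x * star a" using s1 sa by (metis mult.assoc)
  have herm: "star (a*x) = a*x"
  proof -
    have "a*x = a*x*star x*star a" using xx by (metis mult.assoc)
    also have "\<dots> = (a*x) * star (a*x)" using sm by (simp add: mult.assoc)
    finally have e: "a*x = (a*x) * star (a*x)" .
    have "star (a*x) = star (star (a*x)) * star (a*x)" using e sm by metis
    then show ?thesis using e ss by simp
  qed
  have xax: "x*a*x = x"
  proof -
    have "x*a*x = x * star (a*x)" using herm by (simp add: mult.assoc)
    also have "\<dots> = x * star x * star a" using sm by (simp add: mult.assoc)
    finally show ?thesis using xx by simp
  qed
  have "x*a*a = a" using r2 xax by (metis mult.assoc)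
  moreover have "a*x*x = x" using r1 axa by (metis mult.assoc)
  ultimately show ?thesis using axa xax herm by simp
qed

lemma char_core:
  fixes star :: "'a::ring_1 \<Rightarrow> 'a"
  assumes inv: "is_involution star"
    and h: "a*y*a = a" "y*a*y = y" "star (a*y) = a*y" "y*a*a = a" "a*y*y = y"
  shows "is_core_inverse star a y"
proof -
  have sm: "\<And>u v. star (u*v) = star v * star u"
    using inv unfolding is_involution_def by auto
  have "right_ideal y = right_ideal a"
  proof
    show "right_ideal y \<subseteq> right_ideal a" unfolding right_ideal_def
      using h(5) by (auto simp: mult.assoc) (metis mult.assoc)
    show "right_ideal a \<subseteq> right_ideal y" unfolding right_ideal_def
      using h(4) by (auto simp: mult.assoc) (metis mult.assoc)
  qed
  moreover have "left_ideal y = left_ideal (star a)"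
  proof -
    have e1: "y = (y * star y) * star a"
      using h(2) h(3) sm by (metis mult.assoc)
    have e2: "star a = (star a * a) * y"
      using h(1) h(3) sm by (metis mult.assoc)
    show ?thesis
    proof
      show "left_ideal y \<subseteq> left_ideal (star a)" unfolding left_ideal_def
        using e1 by auto (metis mult.assoc)
      show "left_ideal (star a) \<subseteq> left_ideal y" unfolding left_ideal_def
        using e2 by auto (metis mult.assoc)
    qed
  qed
  ultimately show ?thesis using h(1) unfolding is_core_inverse_def by simp
qed

lemma core_unique:
  fixes star :: "'a::ring_1 \<Rightarrow> 'a"
  assumes inv: "is_involution star" and cx: "is_core_inverse star a x" and cy: "is_core_inverse star a y"
  shows "x = y"
proof -
  have sm: "\<And>u v. star (u*v) = star v * star u"
    using inv unfolding is_involution_def by auto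
  note px = inv_props[OF inv cx] and py = inv_props[OF inv cy]
  have "a*x = star (a*x)" using px by simp
  also have "\<dots> = star x * star a" using sm by simp
  also have "\<dots> = star x * star (a*y*a)" using py by simp
  also have "\<dots> = star (a*x) * star (a*y)" using sm by (simp add: mult.assoc)
  also have "\<dots> = a*x*(a*y)" using px py by simp
  also have "\<dots> = a*y" using px by (simp only: mult.assoc[symmetric])
  finally have axy: "a*x = a*y" .
  have px5: "a*x*x = x" and py4: "y*a*a = a" and py2: "y*a*y = y" using px py by auto
  have "y*a*x = y*a*(a*x*x)" by (simp only: px5)
  also have "\<dots> = y*a*a*(x*x)" by (simp only: mult.assoc)
  also have "\<dots> = a*(x*x)" by (simp only: py4)
  also have "\<dots> = x" by (simp only: mult.assoc[symmetric] px5)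
  finally have yax: "y*a*x = x" .
  have "x = y*(a*x)" using yax by (simp only: mult.assoc)
  also have "\<dots> = y*(a*y)" by (simp only: axy)
  also have "\<dots> = y" using py2 by (simp only: mult.assoc)
  finally show ?thesis .
qed

lemma core_inv_eq:
  assumes "is_involution star" "is_core_inverse star a x"
  shows "core_inv star a = x"
  unfolding core_inv_def using assms core_unique by (metis the_equality)

lemma group_unique:
  fixes a :: "'a::ring_1"
  assumes g: "is_group_inverse a g" and h: "is_group_inverse a h"
  shows "g = h"
proof -
  have g1: "a*g*a = a" "g*a*g = g" "a*g = g*a" and h1: "a*h*a = a" "h*a*h = h" "a*h = h*a"
    using g h unfolding is_group_inverse_def by auto
  have "a*g = a*h*a*g" using h1(1) by simp
  also have "\<dots> = h*a*a*g" by (simp only: h1(3))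
  also have "\<dots> = h*a*(a*g)" by (simp only: mult.assoc)
  also have "\<dots> = h*a*(g*a)" by (simp only: g1(3))
  also have "\<dots> = h*(a*g*a)" by (simp only: mult.assoc)
  also have "\<dots> = h*a" by (simp only: g1(1))
  finally have agh: "a*g = a*h" using h1(3) by simp
  have "g = g*a*g" using g1(2) by simp
  also have "\<dots> = g*(a*g)" by (simp only: mult.assoc)
  also have "\<dots> = g*(a*h)" by (simp only: agh)
  also have "\<dots> = g*a*h" by (simp only: mult.assoc)
  also have "\<dots> = a*g*h" by (simp only: g1(3))
  also have "\<dots> = a*h*h" by (simp only: agh)
  also have "\<dots> = h*a*h" by (simp only: h1(3))
  also have "\<dots> = h" by (rule h1(2))
  finally show ?thesis .
qed

lemma pow_props:
  fixes a x :: "'a::ring_1"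
  assumes h: "a*x*a = a" "x*a*x = x" "x*a*a = a" "a*x*x = x"
  shows "a^Suc n * x^Suc n = a*x \<and> x^Suc n * a^Suc n = x*a"
proof (induction n)
  case 0 then show ?case by simp
next
  case (Suc n)
  have "a^Suc (Suc n) * x^Suc (Suc n) = a*(a^Suc n * x^Suc n)*x"
    unfolding power_Suc[of a "Suc n"] power_Suc2[of x "Suc n"] by (simp only: mult.assoc)
  also have "\<dots> = a*x" using Suc h by (simp add: mult.assoc)
  finally have 1: "a^Suc (Suc n) * x^Suc (Suc n) = a*x" .
  have "x^Suc (Suc n) * a^Suc (Suc n) = x*(x^Suc n * a^Suc n)*a"
    unfolding power_Suc[of x "Suc n"] power_Suc2[of a "Suc n"] by (simp only: mult.assoc)
  also have "\<dots> = x*a" using Suc h by (simp add: mult.assoc)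
  finally show ?case using 1 by simp
qed

lemma pow_core:
  fixes star :: "'a::ring_1 \<Rightarrow> 'a"
  assumes inv: "is_involution star" and c: "is_core_inverse star a x"
  shows "is_core_inverse star (a^Suc n) (x^Suc n)"
proof -
  note p = inv_props[OF inv c]
  have A: "a^Suc n * x^Suc n = a*x" and B: "x^Suc n * a^Suc n = x*a"
    using pow_props[of a x n] p by auto
  show ?thesis
  proof (rule char_core[OF inv])
    show "a^Suc n * x^Suc n * a^Suc n = a^Suc n"
      unfolding A unfolding power_Suc[of a n] using p by (simp add: mult.assoc[symmetric])
    show "x^Suc n * a^Suc n * x^Suc n = x^Suc n"
      unfolding B unfolding power_Suc[of x n] using p by (simp add: mult.assoc[symmetric])
    show "star (a^Suc n * x^Suc n) = a^Suc n * x^Suc n" using A p by simp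
    show "x^Suc n * a^Suc n * a^Suc n = a^Suc n"
      unfolding B unfolding power_Suc[of a n] using p by (simp add: mult.assoc[symmetric])
    show "a^Suc n * x^Suc n * x^Suc n = x^Suc n"
      unfolding A unfolding power_Suc[of x n] using p by (simp add: mult.assoc[symmetric])
  qed
qed

theorem proposition3p4:
  fixes star :: "'a::ring_1 \<Rightarrow> 'a" and a b :: 'a
  assumes "is_involution star"
    and "core_invertible star a"
    and "core_le star a b"
  shows "(sharp_le a b \<longleftrightarrow> a * b = b * a)
       \<and> (a * b = b * a \<longleftrightarrow> core_le star (a ^ 2) (b ^ 2))
       \<and> (core_le star (a ^ 2) (b ^ 2) \<longleftrightarrow> (\<forall>k::nat. k \<ge> 2 \<longrightarrow> core_le star (a ^ k) (b ^ k)))"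
proof -
  note inv = assms(1)
  obtain x where cx: "is_core_inverse star a x" using assms(2) unfolding core_invertible_def by auto
  have cix: "core_inv star a = x" using core_inv_eq[OF inv cx] .
  note p = inv_props[OF inv cx]
  have le: "x*a = x*b" "a*x = b*x" using assms(3) cix unfolding core_le_def by auto
  have r1: "a*(x*a) = a" "a*(x*(a*z)) = a*z" for z using p by (simp_all add: mult.assoc[symmetric])
  have r2: "x*(a*x) = x" "x*(a*(x*z)) = x*z" for z using p by (simp_all add: mult.assoc[symmetric])
  have r3: "x*(a*a) = a" "x*(a*(a*z)) = a*z" for z using p by (simp_all add: mult.assoc[symmetric])
  have r4: "a*(x*x) = x" "a*(x*(x*z)) = x*z" for z using p by (simp_all add: mult.assoc[symmetric])
  have lb1: "x*b = x*a" "x*(b*z) = x*(a*z)" for z using le by (simp_all add: mult.assoc[symmetric])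
  have lb2: "b*x = a*x" "b*(x*z) = a*(x*z)" for z using le by (simp_all add: mult.assoc[symmetric])
  note R = r1 r2 r3 r4
  define g where "g = x*x*a"
  have gi: "is_group_inverse a g" unfolding is_group_inverse_def g_def
    by (simp add: mult.assoc R)
  have ginv: "group_inv a = g" unfolding group_inv_def
    using gi group_unique by (metis the_equality)
  have ga: "g*a = x*a" unfolding g_def by (simp add: mult.assoc R)
  have ag: "a*g = x*a" unfolding g_def by (simp add: mult.assoc R)
  have bg: "b*g = x*a" unfolding g_def by (simp add: mult.assoc R lb2)
  have gb: "g*b = x*x*a*b" unfolding g_def by simp
  have ba: "b*a = a*a"
  proof -
    have "b*a = b*(x*(a*a))" using r3 by simp
    also have "\<dots> = a*a" by (simp only: lb2(2)) (simp add: R)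
    finally show ?thesis .
  qed
  have S: "sharp_le a b \<longleftrightarrow> x*x*a*b = x*a"
    unfolding sharp_le_def ginv using gi ga ag bg gb unfolding group_invertible_def by auto
  have C: "a*b = b*a \<longleftrightarrow> x*x*a*b = x*a"
  proof
    assume "a*b = b*a"
    then have ab: "a*b = a*a" using ba by simp
    have "x*x*a*b = x*(x*(a*a))" by (simp add: mult.assoc ab)
    then show "x*x*a*b = x*a" by (simp add: R)
  next
    assume h: "x*x*a*b = x*a"
    have h': "x*(x*(a*b)) = x*a" using h by (simp add: mult.assoc)
    have "a*b = a*(x*(a*b))" by (simp add: R)
    also have "\<dots> = a*(a*(x*(x*(a*b))))" by (simp add: R)
    also have "\<dots> = a*a" by (simp only: h') (simp add: R)
    finally show "a*b = b*a" using ba by simp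
  qed
  have bka: "\<And>n. b^n * a = a^Suc n"
  proof -
    fix n show "b^n * a = a^Suc n"
    proof (induction n)
      case 0 show ?case by simp
    next
      case (Suc n)
      have "b^Suc n * a = b^n * (b*a)" by (simp only: power_Suc2 mult.assoc)
      also have "\<dots> = (b^n*a)*a" using ba by (simp add: mult.assoc)
      finally show ?case using Suc.IH by (simp only: power_Suc2[of a "Suc n"])
    qed
  qed
  have K: "core_le star (a^Suc n) (b^Suc n) \<longleftrightarrow> x^Suc n * a^Suc n = x^Suc n * b^Suc n" for n
  proof -
    have ck: "core_inv star (a^Suc n) = x^Suc n" using core_inv_eq[OF inv pow_core[OF inv cx]] .
    have "b^Suc n * x^Suc n = b^n * (b*x) * x^n" unfolding power_Suc2[of b n] power_Suc[of x n] by (simp only: mult.assoc)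
    also have "\<dots> = (b^n * a) * (x * x^n)" by (metis le(2) mult.assoc)
    also have "\<dots> = a^Suc n * x^Suc n" by (simp only: bka power_Suc[of x n])
    finally have "b^Suc n * x^Suc n = a^Suc n * x^Suc n" .
    then have e: "b^Suc n * x^Suc n = a^Suc n * x^Suc n" .
    have ci: "core_invertible star (a^Suc n)"
      unfolding core_invertible_def by (rule exI, rule pow_core[OF inv cx])
    show ?thesis unfolding core_le_def ck e using ci by simp
  qed
  have x2': "x^Suc 1 * a^Suc 1 = x*a" using pow_props[of a x 1] p by blast
  have x2: "x^2 * a^2 = x*a" using x2' by (simp only: numeral_2_eq_2 One_nat_def)
  have x2b: "x^2 * b^2 = x*x*a*b"
    unfolding power2_eq_square by (simp add: mult.assoc lb1)
  have T: "core_le star (a^2) (b^2) \<longleftrightarrow> x*x*a*b = x*a"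
  proof -
    have K2: "core_le star (a^2) (b^2) \<longleftrightarrow> x^2*a^2 = x^2*b^2"
      using K[of 1] by (simp only: numeral_2_eq_2 One_nat_def)
    show ?thesis unfolding K2 x2 x2b by auto
  qed
  have abn: "a*b = b*a \<Longrightarrow> a * b^n = a^Suc n" for n
  proof (induction n)
    case 0 show ?case by simp
  next
    case (Suc n)
    have "a*b^Suc n = (a*b)*b^n" by (simp add: power_Suc mult.assoc)
    also have "\<dots> = a*(a*b^n)" using Suc.prems ba by (simp add: mult.assoc)
    finally show ?case using Suc.IH[OF Suc.prems] by (simp only: power_Suc[of a "Suc n"])
  qed
  have U: "(\<forall>k::nat. k \<ge> 2 \<longrightarrow> core_le star (a ^ k) (b ^ k)) \<longleftrightarrow> core_le star (a ^ 2) (b ^ 2)"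
  proof
    assume "\<forall>k::nat. k \<ge> 2 \<longrightarrow> core_le star (a ^ k) (b ^ k)"
    then show "core_le star (a ^ 2) (b ^ 2)" by simp
  next
    assume "core_le star (a ^ 2) (b ^ 2)"
    then have cm: "a*b = b*a" using T C by simp
    show "\<forall>k::nat. k \<ge> 2 \<longrightarrow> core_le star (a ^ k) (b ^ k)"
    proof (intro allI impI)
      fix k :: nat assume "k \<ge> 2"
      then obtain n where kn: "k = Suc n" by (cases k) auto
      have "x^Suc n * b^Suc n = x^n * (x*b) * b^n" unfolding power_Suc2[of x n] power_Suc[of b n] by (simp only: mult.assoc)
      also have "\<dots> = x^n * x * (a * b^n)" by (metis le(1) mult.assoc)
      also have "\<dots> = x^Suc n * a^Suc n" unfolding abn[OF cm] power_Suc2[of x n] ..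
      finally have "x^Suc n * b^Suc n = x^Suc n * a^Suc n" .
      then show "core_le star (a ^ k) (b ^ k)" unfolding kn K by (rule sym)
    qed
  qed
  show ?thesis using S C T U by blast
qed

end
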